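(* Let $n \ge m \ge 2$ and let $K_{n,m}$ be the complete bipartite graph with bipartition $(X,Y)$, $|X|=n$, $|Y|=m$. If $U$ is a strong edge geodetic set of $K_{n,m}$ with $Y \subseteq U$, then $|U| \ge n+1$.
   Context: All graphs are finite, simple and connected. A set $S \subseteq V(G)$ is a strong edge geodetic set of $G$ if one can assign to every unordered pair $\{u,v\}$ of distinct vertices of $S$ either one shortest $u,v$-path $P_{uv}$ in $G$ or no path, in such a way that every edge of $G$ lies on at least one of the assigned paths. *)

theory Defs
  imports Main
begin

text \<open>Simple graphs are given by a vertex set V and an adjacency relation E
  (symmetric, irreflexive). Paths/walks are nonempty vertex lists.\<close>

definition is_walk :: "'a set \<Rightarrow> ('a \<Rightarrow> 'a \<Rightarrow> bool) \<Rightarrow> 'a list \<Rightarrow> bool" where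
  "is_walk V E p \<longleftrightarrow> p \<noteq> [] \<and> set p \<subseteq> V \<and>
     (\<forall>i. Suc i < length p \<longrightarrow> E (p ! i) (p ! Suc i))"

definition is_path :: "'a set \<Rightarrow> ('a \<Rightarrow> 'a \<Rightarrow> bool) \<Rightarrow> 'a list \<Rightarrow> bool" where
  "is_path V E p \<longleftrightarrow> is_walk V E p \<and> distinct p"

definition shortest_path :: "'a set \<Rightarrow> ('a \<Rightarrow> 'a \<Rightarrow> bool) \<Rightarrow> 'a \<Rightarrow> 'a \<Rightarrow> 'a list \<Rightarrow> bool" where
  "shortest_path V E u v p \<longleftrightarrow> is_path V E p \<and> hd p = u \<and> last p = v \<and>
     (\<forall>q. is_walk V E q \<and> hd q = u \<and> last q = v \<longrightarrow> length p \<le> length q)"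

definition edge_on_path :: "'a \<Rightarrow> 'a \<Rightarrow> 'a list \<Rightarrow> bool" where
  "edge_on_path x y p \<longleftrightarrow> (\<exists>i. Suc i < length p \<and> {p ! i, p ! Suc i} = {x, y})"

text \<open>Strong edge geodetic set: an assignment of an optional shortest path to each
  unordered pair {u,v} of distinct vertices of S covering every edge.\<close>
definition strong_edge_geodetic :: "'a set \<Rightarrow> ('a \<Rightarrow> 'a \<Rightarrow> bool) \<Rightarrow> 'a set \<Rightarrow> bool" where
  "strong_edge_geodetic V E S \<longleftrightarrow> S \<subseteq> V \<and>
     (\<exists>P :: 'a set \<Rightarrow> 'a list option.
        (\<forall>u\<in>S. \<forall>v\<in>S. \<forall>p. u \<noteq> v \<and> P {u, v} = Some p \<longrightarrow>
             shortest_path V E u v p \<or> shortest_path V E v u p) \<and>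
        (\<forall>x\<in>V. \<forall>y\<in>V. E x y \<longrightarrow>
             (\<exists>u\<in>S. \<exists>v\<in>S. \<exists>p. u \<noteq> v \<and> P {u, v} = Some p \<and> edge_on_path x y p)))"

definition complete_bipartite_adj :: "'a set \<Rightarrow> 'a set \<Rightarrow> 'a \<Rightarrow> 'a \<Rightarrow> bool" where
  "complete_bipartite_adj X Y u v \<longleftrightarrow> (u \<in> X \<and> v \<in> Y) \<or> (u \<in> Y \<and> v \<in> X)"

end

theory Submission
  imports Defs
begin

lemma walk3:
  assumes "is_walk V E p" "hd p = u" "last p = v" "length p \<le> 3"
    "x \<in> set p" "x \<noteq> u" "x \<noteq> v"
  shows "p = [u, x, v]"
proof -
  have ne: "p \<noteq> []" using assms(1) by (simp add: is_walk_def)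
  consider a where "p = [a]" | a b where "p = [a,b]" | a b c where "p = [a,b,c]"
    using ne assms(4)
    by (cases p; simp; rename_tac a l; case_tac l; simp; rename_tac b l'; case_tac l'; auto)
  then show ?thesis using assms by cases auto
qed

lemma edge_on_path_set: "edge_on_path x y p \<Longrightarrow> x \<in> set p \<and> y \<in> set p"
  unfolding edge_on_path_def
  by (metis Suc_lessD doubleton_eq_iff nth_mem)

lemma sp_len:
  assumes "X \<inter> Y = {}" "a0 \<in> X" "b0 \<in> Y" "u \<in> X \<union> Y" "v \<in> X \<union> Y"
    "shortest_path (X \<union> Y) (complete_bipartite_adj X Y) u v p"
  shows "length p \<le> 3"
proof -
  let ?E = "complete_bipartite_adj X Y"
  have "\<exists>q. is_walk (X \<union> Y) ?E q \<and> hd q = u \<and> last q = v \<and> length q \<le> 3"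
  proof (cases "u \<in> Y \<and> v \<in> Y")
    case True
    then show ?thesis
      by (intro exI[of _ "[u,a0,v]"]) (auto simp: is_walk_def complete_bipartite_adj_def assms(2) less_Suc_eq nth_Cons split: nat.splits)
  next
    case f1: False
    show ?thesis
    proof (cases "u \<in> X \<and> v \<in> X")
      case True
      then show ?thesis
        by (intro exI[of _ "[u,b0,v]"]) (auto simp: is_walk_def complete_bipartite_adj_def assms(3) less_Suc_eq nth_Cons split: nat.splits)
    next
      case False
      then have "?E u v" using f1 assms(4,5) by (auto simp: complete_bipartite_adj_def)
      then show ?thesis using assms(4,5)
        by (intro exI[of _ "[u,v]"]) (auto simp: is_walk_def)
    qed
  qed
  then show ?thesis using assms(6) unfolding shortest_path_def by force
qed

lemma key:
  assumes "X \<inter> Y = {}" "a0 \<in> X" "b0 \<in> Y" "u \<in> X \<union> Y" "v \<in> X \<union> Y"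
    "shortest_path (X \<union> Y) (complete_bipartite_adj X Y) u v p"
    "x \<in> set p" "x \<in> X" "x \<noteq> u" "x \<noteq> v"
  shows "set p = {u, x, v} \<and> u \<in> Y \<and> v \<in> Y"
proof -
  have l: "length p \<le> 3" using sp_len[OF assms(1-6)] .
  have w: "is_walk (X \<union> Y) (complete_bipartite_adj X Y) p" using assms(6)
    by (simp add: shortest_path_def is_path_def)
  have p: "p = [u,x,v]" using walk3[OF w _ _ l assms(7,9,10)] assms(6)
    by (simp add: shortest_path_def)
  have "complete_bipartite_adj X Y u x" "complete_bipartite_adj X Y x v"
    using w p unfolding is_walk_def by (auto dest: spec[of _ 0] spec[of _ 1])
  then show ?thesis using p assms(1,8) by (auto simp: complete_bipartite_adj_def)
qed

theorem mainTheorem3: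
  fixes X Y U :: "'a set" and n m :: nat
  assumes "finite X" and "finite Y" and "X \<inter> Y = {}"
    and "card X = n" and "card Y = m" and "n \<ge> m" and "m \<ge> 2"
    and "strong_edge_geodetic (X \<union> Y) (complete_bipartite_adj X Y) U"
    and "Y \<subseteq> U"
  shows "card U \<ge> n + 1"
proof -
  let ?E = "complete_bipartite_adj X Y"
  obtain P where UV: "U \<subseteq> X \<union> Y" and
    P1: "\<forall>u\<in>U. \<forall>v\<in>U. \<forall>p. u \<noteq> v \<and> P {u, v} = Some p \<longrightarrow>
             shortest_path (X \<union> Y) ?E u v p \<or> shortest_path (X \<union> Y) ?E v u p" and
    P2: "\<forall>x\<in>X \<union> Y. \<forall>y\<in>X \<union> Y. ?E x y \<longrightarrow>
             (\<exists>u\<in>U. \<exists>v\<in>U. \<exists>p. u \<noteq> v \<and> P {u, v} = Some p \<and> edge_on_path x y p)"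
    using assms(8) unfolding strong_edge_geodetic_def by blast
  have "m > 0" using assms(7) by simp
  then have "Y \<noteq> {}" using assms(5) by auto
  then obtain b0 where b0: "b0 \<in> Y" by auto
  have "X \<noteq> {}" using assms(4-7) by auto
  then obtain a0 where a0: "a0 \<in> X" by auto
  have K: "set p = {u, x, v} \<and> u \<in> Y \<and> v \<in> Y"
    if "u \<in> U" "v \<in> U" "u \<noteq> v" "P {u,v} = Some p" "x \<in> set p" "x \<in> X" "x \<notin> U" for u v p x
  proof -
    have "u \<in> X \<union> Y" "v \<in> X \<union> Y" using that UV by auto
    moreover have "x \<noteq> u" "x \<noteq> v" using that by auto
    moreover have "shortest_path (X \<union> Y) ?E u v p \<or> shortest_path (X \<union> Y) ?E v u p"
      using P1 that by blast
    ultimately show ?thesis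
      using key[OF assms(3) a0 b0, of u v p x] key[OF assms(3) a0 b0, of v u p x] that
      by blast
  qed
  define B where "B = X - U"
  define S where "S x = {e. \<exists>u\<in>Y. \<exists>v\<in>Y. u \<noteq> v \<and> e = {u,v} \<and> (\<exists>p. P e = Some p \<and> x \<in> set p)}" for x
  define Pairs where "Pairs = {e. e \<subseteq> Y \<and> card e = 2}"
  have finB: "finite B" using assms(1) B_def by auto
  have SP: "S x \<subseteq> Pairs" for x unfolding S_def Pairs_def by auto
  have finP: "finite Pairs" unfolding Pairs_def using assms(2) by auto
  have finS: "finite (S x)" for x using SP finP finite_subset by blast
  have disj: "\<forall>i\<in>B. \<forall>j\<in>B. i \<noteq> j \<longrightarrow> S i \<inter> S j = {}"
  proof (intro ballI impI)
    fix i j assume ij: "i \<in> B" "j \<in> B" "i \<noteq> j"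
    show "S i \<inter> S j = {}"
    proof (rule ccontr)
      assume "S i \<inter> S j \<noteq> {}"
      then obtain e where "e \<in> S i" "e \<in> S j" by blast
      from \<open>e \<in> S i\<close> obtain u v p where uv0: "u \<in> Y" "v \<in> Y" "u \<noteq> v" "e = {u,v}" "P e = Some p" "i \<in> set p"
        unfolding S_def by blast
      from \<open>e \<in> S j\<close> obtain p' where "P e = Some p'" "j \<in> set p'"
        unfolding S_def by blast
      then have uv: "u \<in> Y" "v \<in> Y" "u \<noteq> v" "P {u,v} = Some p" "i \<in> set p"
        "P {u,v} = Some p'" "j \<in> set p'" using uv0 by auto
      then have pp: "p' = p" by simp
      have "set p = {u, i, v}" using K[of u v p i] uv ij assms(9) B_def by auto
      then show False using uv pp ij assms(3) B_def by auto
    qed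
  qed
  have cov: "Y \<subseteq> \<Union> (S x)" if x: "x \<in> B" for x
  proof
    fix y assume y: "y \<in> Y"
    have "?E x y" using x y B_def by (simp add: complete_bipartite_adj_def)
    then obtain u v p where uvp: "u \<in> U" "v \<in> U" "u \<noteq> v" "P {u,v} = Some p" "edge_on_path x y p"
      using P2 x y B_def by blast
    have xy: "x \<in> set p" "y \<in> set p" using edge_on_path_set[OF uvp(5)] by auto
    have k: "set p = {u, x, v} \<and> u \<in> Y \<and> v \<in> Y" using K[OF uvp(1-4) xy(1)] x B_def by auto
    have "y \<noteq> x" using x y B_def assms(3) by auto
    then have "y \<in> {u,v}" using k xy by auto
    moreover have "{u,v} \<in> S x" unfolding S_def using k uvp xy by blast
    ultimately show "y \<in> \<Union> (S x)" by blast
  qed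
  have cS: "m \<le> 2 * card (S x)" if x: "x \<in> B" for x
  proof -
    have sub: "\<Union> (S x) \<subseteq> Y" using SP unfolding Pairs_def by blast
    have fU: "finite (\<Union> (S x))" using sub assms(2) by (rule finite_subset)
    have c2: "card e = 2" if "e \<in> S x" for e using SP that unfolding Pairs_def by blast
    have "m \<le> card (\<Union> (S x))" unfolding assms(5)[symmetric] by (rule card_mono[OF fU cov[OF x]])
    also have "\<dots> \<le> sum card (S x)" by (rule card_Union_le_sum_card)
    also have "\<dots> = sum (\<lambda>_. 2) (S x)"
      by (rule sum.cong) (simp_all add: c2)
    finally show ?thesis by simp
  qed
  have "(\<Sum>x\<in>B. card (S x)) = card (\<Union> (S ` B))"
    by (rule card_UN_disjoint[symmetric]) (use finB finS disj in auto)
  also have "\<dots> \<le> card Pairs" by (rule card_mono[OF finP]) (use SP in auto)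
  also have "\<dots> = m choose 2" unfolding Pairs_def using n_subsets[OF assms(2)] assms(5) by simp
  finally have s: "(\<Sum>x\<in>B. card (S x)) \<le> m choose 2" .
  have "card B * m \<le> 2 * (\<Sum>x\<in>B. card (S x))"
  proof -
    have "card B * m = (\<Sum>x\<in>B. m)" by simp
    also have "\<dots> \<le> (\<Sum>x\<in>B. 2 * card (S x))" by (rule sum_mono) (use cS in auto)
    finally show ?thesis by (simp add: sum_distrib_left)
  qed
  also have "\<dots> \<le> 2 * (m choose 2)" using s by simp
  also have "\<dots> \<le> m * (m - 1)"
  proof -
    have h: "2 * (k div 2) \<le> k" for k :: nat by presburger
    show ?thesis unfolding choose_two by (rule h)
  qed
  finally have "card B * m \<le> (m - 1) * m" by (simp add: mult.commute)
  then have cB: "card B \<le> m - 1" using \<open>m > 0\<close> by simp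
  have U_eq: "U = (X \<inter> U) \<union> Y" using UV assms(9) by auto
  have cU: "card U = card (X \<inter> U) + m"
  proof -
    have "card ((X \<inter> U) \<union> Y) = card (X \<inter> U) + card Y"
      by (rule card_Un_disjoint) (use assms(1-3) in auto)
    then show ?thesis using assms(5) by (subst U_eq) simp
  qed
  have "card X = card (X \<inter> U) + card B"
  proof -
    have e: "(X \<inter> U) \<union> (X - U) = X" by auto
    have "card ((X \<inter> U) \<union> (X - U)) = card (X \<inter> U) + card (X - U)"
      by (rule card_Un_disjoint) (use assms(1) in auto)
    then show ?thesis using e B_def by simp
  qed
  then show ?thesis using cU cB assms(4,6,7) by linarith
qed

end
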